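(* Let $m$ be a positive integer, let $s \in S_m$ be a cycle of length $k < m$, and let $a$ be a positive divisor of $k$ with $(k,a) \neq (4,2)$. Then there exists $x \in S_m$ such that $\langle s \rangle \cap \langle s \rangle^x = \langle s^a \rangle$. *)

theory Defs
  imports "HOL-Algebra.Sym_Groups"
begin

definition conj_set :: "('a, 'b) monoid_scheme \<Rightarrow> 'a set \<Rightarrow> 'a \<Rightarrow> 'a set"
  where "conj_set G H x = (\<lambda>h. inv\<^bsub>G\<^esub> x \<otimes>\<^bsub>G\<^esub> h \<otimes>\<^bsub>G\<^esub> x) ` H"

end

theory Submission
  imports Defs "HOL-Algebra.Multiplicative_Group"
begin


lemma (in group) conj_abstract:
  assumes fin: "finite (carrier G)" and s: "s \<in> carrier G" and x: "x \<in> carrier G"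
    and C: "x \<otimes> s [^] (a::nat) = s [^] a \<otimes> x"
    and K: "\<And>j l::nat. x \<otimes> s [^] l = s [^] j \<otimes> x \<Longrightarrow> a dvd j"
  shows "generate G {s} \<inter> conj_set G (generate G {s}) x = generate G {s [^] a}"
proof -
  have sa: "s [^] a \<in> carrier G" using s by simp
  have comm: "x \<otimes> (s [^] a) [^] (t::nat) = (s [^] a) [^] t \<otimes> x" for t
  proof (induction t)
    case 0 then show ?case using x by simp
  next
    case (Suc t)
    have "x \<otimes> (s [^] a) [^] Suc t = (x \<otimes> (s [^] a) [^] t) \<otimes> s [^] a"
      using x sa by (simp add: m_assoc)
    also have "\<dots> = (s [^] a) [^] t \<otimes> (x \<otimes> s [^] a)" using Suc x sa by (simp add: m_assoc)
    also have "\<dots> = (s [^] a) [^] Suc t \<otimes> x" using C x sa by (simp add: m_assoc)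
    finally show ?case .
  qed
  have conjfix: "inv x \<otimes> g \<otimes> x = g" if "g \<in> carrier G" "x \<otimes> g = g \<otimes> x" for g
    using that x by (metis inv_closed l_inv l_one m_assoc)
  have gs: "generate G {s} = {s [^] k | k. k \<in> (UNIV :: nat set)}"
    using generate_pow_on_finite_carrier[OF fin s] .
  have gsa: "generate G {s [^] a} = {(s [^] a) [^] k | k. k \<in> (UNIV :: nat set)}"
    using generate_pow_on_finite_carrier[OF fin sa] .
  show ?thesis
  proof
    show "generate G {s} \<inter> conj_set G (generate G {s}) x \<subseteq> generate G {s [^] a}"
    proof
      fix h assume h: "h \<in> generate G {s} \<inter> conj_set G (generate G {s}) x"
      then obtain l :: nat where hl: "h = s [^] l" using gs by auto
      from h obtain j :: nat where hj: "h = inv x \<otimes> s [^] j \<otimes> x"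
        unfolding conj_set_def gs by auto
      have "x \<otimes> s [^] l = s [^] j \<otimes> x"
        using hl hj x s by (metis nat_pow_closed inv_closed m_assoc r_inv l_one m_closed)
      then have "a dvd j" by (rule K)
      then obtain t where jt: "j = a * t" by auto
      have "s [^] j = (s [^] a) [^] t" using jt s by (simp add: nat_pow_pow)
      then have "h = (s [^] a) [^] t" using hj conjfix[of "(s [^] a) [^] t"] comm[of t] sa by simp
      then show "h \<in> generate G {s [^] a}" using gsa by auto
    qed
  next
    show "generate G {s [^] a} \<subseteq> generate G {s} \<inter> conj_set G (generate G {s}) x"
    proof
      fix h assume "h \<in> generate G {s [^] a}"
      then obtain t :: nat where ht: "h = (s [^] a) [^] t" using gsa by auto
      have h2: "h = s [^] (a * t)" using ht s by (simp add: nat_pow_pow)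
      have "h \<in> generate G {s}" using h2 gs by auto
      moreover have "h = inv x \<otimes> h \<otimes> x" using conjfix[of h] comm[of t] ht sa by simp
      ultimately show "h \<in> generate G {s} \<inter> conj_set G (generate G {s}) x"
        unfolding conj_set_def by auto
    qed
  qed
qed

lemma sym_pow: "s [^]\<^bsub>sym_group m\<^esub> (n::nat) = s ^^ n"
proof (induction n)
  case 0 then show ?case by (simp add: sym_group_one)
next
  case (Suc n) then show ?case by (simp add: sym_group_mult funpow_Suc_right del: funpow.simps)
qed

lemma cyc_pow:
  assumes "distinct cs" "length cs = k" "0 < k"
  shows "(cycle_of_list cs ^^ l) (cs ! (i mod k)) = cs ! ((i + l) mod k)"
proof -
  have "map (cycle_of_list cs ^^ l) cs = rotate l cs" using cyclic_rotation assms(1) by blast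
  then have "(cycle_of_list cs ^^ l) (cs ! (i mod k)) = rotate l cs ! (i mod k)"
    by (metis assms(2,3) mod_less_divisor nth_map)
  also have "\<dots> = cs ! ((i mod k + l) mod k)" using assms by (simp add: nth_rotate add.commute)
  finally show ?thesis by (metis add.commute mod_add_left_eq)
qed

lemma cyc_out: "y \<notin> set cs \<Longrightarrow> (cycle_of_list cs ^^ l) y = y"
  by (induction l) (simp_all add: id_outside_supp)



lemma arith_key:
  fixes k a l j :: int
  assumes a0: "0 < a" and ak: "a < k" and adk: "a dvd k" and ex: "\<not> (k = 4 \<and> a = 2)" and l0: "0 \<le> l"
  and H: "\<And>i. 0 \<le> i \<Longrightarrow> k dvd ((i + l + (if a dvd (i + l) then a else 0)) - (i + (if a dvd i then a else 0) + j))"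
  shows "a dvd j"
proof (cases "a dvd l")
  case True
  have "k dvd (l - j)" using H[of 0] True by simp
  then have "a dvd (l - j)" using adk dvd_trans by blast
  from dvd_diff[OF True this] show ?thesis by simp
next
  case False
  have H0: "k dvd (l - a - j)" using H[of 0] False by (simp add: diff_diff_eq)
  have "1 * l \<le> k * l" using ak a0 l0 by (intro mult_right_mono) auto
  then have i1: "0 \<le> k * l - l" by simp
  have d1: "a dvd (k * l - l + l)" using adk by simp
  have d2: "\<not> a dvd (k * l - l)"
  proof
    assume a1: "a dvd (k * l - l)"
    have a2: "a dvd k * l" using adk by simp
    have "a dvd k * l - (k * l - l)" using dvd_diff[OF a2 a1] .
    then have "a dvd l" by simp
    then show False using False by simp
  qed
  have "k dvd (k * l - l + l + a) - (k * l - l + 0 + j)"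
    using H[OF i1, unfolded if_P[OF d1] if_not_P[OF d2]] .
  moreover have "(k * l - l + l + a) - (k * l - l + 0 + j) = a + l - j" by simp
  ultimately have H1: "k dvd (a + l - j)" by metis
  have "k dvd (a + l - j) - (l - a - j)" using dvd_diff[OF H1 H0] .
  moreover have "(a + l - j) - (l - a - j) = 2 * a" by simp
  ultimately have k2a: "k dvd 2 * a" by metis
  obtain q where q: "k = a * q" using adk by auto
  have "q > 1"
  proof (rule ccontr)
    assume "\<not> q > 1"
    then have "a * q \<le> a * 1" using a0 by (intro mult_left_mono) auto
    then show False using q ak by simp
  qed
  obtain r where r: "2 * a = k * r" using k2a by auto
  then have "2 * a = a * (q * r)" using q by simp
  then have "q * r = 2" using a0 by simp
  then have "q dvd 2" by (metis dvd_triv_left)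
  then have "q \<le> 2" using zdvd_imp_le by simp
  then have "q = 2" using \<open>q > 1\<close> by simp
  then have kk: "k = 2 * a" using q by simp
  have "a \<noteq> 1" using False by auto
  moreover have "a \<noteq> 2" using ex kk by auto
  ultimately have a3: "a \<ge> 3" using a0 by linarith
  obtain i where i: "i \<in> {1, 2}" "\<not> a dvd i" "\<not> a dvd (i + l)"
  proof (cases "a dvd (1 + l)")
    case True
    have "\<not> a dvd (2 + l)"
    proof
      assume "a dvd (2 + l)"
      then have "a dvd (2 + l) - (1 + l)" using True dvd_diff by blast
      then show False using a3 zdvd_imp_le[of a 1] by simp
    qed
    moreover have "\<not> a dvd 2" using a3 zdvd_imp_le[of a 2] by auto
    ultimately show ?thesis using that[of 2] by simp
  next
    case False
    moreover have "\<not> a dvd 1" using a3 by simp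
    ultimately show ?thesis using that[of 1] by simp
  qed
  have "k dvd (l - j)" using H[of i] i by auto
  then have "k dvd (l - j) - (l - a - j)" using H0 dvd_diff by blast
  then have "k dvd a" by simp
  then show ?thesis using zdvd_imp_le[of k a] a0 ak by simp
qed




theorem lemma3p5:
  fixes m k a :: nat and cs :: "nat list" and s :: "nat \<Rightarrow> nat"
  assumes "0 < m"
    and "cycle cs" and "set cs \<subseteq> {1..m}" and "length cs = k"
    and "s = cycle_of_list cs"
    and "k < m"
    and "0 < a" and "a dvd k" and "(k, a) \<noteq> (4, 2)"
  shows "\<exists>x \<in> carrier (sym_group m).
           generate (sym_group m) {s} \<inter> conj_set (sym_group m) (generate (sym_group m) {s}) x
             = generate (sym_group m) {s [^]\<^bsub>sym_group m\<^esub> a}"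
proof -
  note dist = assms(2) and sub = assms(3) and len = assms(4) and sdef = assms(5)
  let ?G = "sym_group m"
  interpret G: group ?G by (rule sym_group_is_group)
  have "carrier ?G = {p. p permutes {1..m}}" by (auto simp: sym_group_carrier)
  then have fin: "finite (carrier ?G)" by (simp add: finite_permutations)
  have sC: "s \<in> carrier ?G"
    using permutes_subset[OF cycle_permutes sub] sdef by (simp add: sym_group_carrier)
  show ?thesis
  proof (cases "k \<le> 1")
    case True
    have "s = id"
    proof (cases cs)
      case Nil then show ?thesis using sdef by simp
    next
      case (Cons c r)
      then have "r = []" using True len by (cases r) auto
      then show ?thesis using sdef Cons by simp
    qed
    then have s1: "s = \<one>\<^bsub>?G\<^esub>" by (simp add: sym_group_one)
    have "generate ?G {s} \<inter> conj_set ?G (generate ?G {s}) \<one>\<^bsub>?G\<^esub>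
             = generate ?G {s [^]\<^bsub>?G\<^esub> a}"
      unfolding s1 conj_set_def by (simp add: G.generate_one)
    then show ?thesis by blast
  next
    case False
    then have k0: "0 < k" by simp
    have spow: "(s ^^ l) (cs ! (i mod k)) = cs ! ((i + l) mod k)" for l i
      using cyc_pow[OF dist len k0] sdef by simp
    have sout: "y \<notin> set cs \<Longrightarrow> (s ^^ l) y = y" for y l
      using cyc_out sdef by simp
    have inj: "cs ! i = cs ! i' \<Longrightarrow> i < k \<Longrightarrow> i' < k \<Longrightarrow> i = i'" for i i'
      using nth_eq_iff_index_eq[OF dist] len by auto
    have modinj: "cs ! (i mod k) = cs ! (i' mod k) \<Longrightarrow> int k dvd int i - int i'" for i i'
    proof -
      assume "cs ! (i mod k) = cs ! (i' mod k)"
      then have "i mod k = i' mod k" using inj k0 by simp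
      then have "int i mod int k = int i' mod int k" by (metis of_nat_mod)
      then show ?thesis by (simp add: mod_eq_dvd_iff)
    qed
    have incs: "y \<in> set cs \<Longrightarrow> \<exists>i. y = cs ! (i mod k)" for y
      by (metis in_set_conv_nth len mod_less)
    show ?thesis
    proof (cases "a = k")
      case True
      have "card (set cs) < card {1..m}" using dist len assms(6) by (simp add: distinct_card)
      then obtain p where p: "p \<in> {1..m}" "p \<notin> set cs"
        using sub by (metis card_mono finite_atLeastAtMost not_le subsetI subset_antisym)
      define x where "x = Transposition.transpose (cs ! (k - 1)) p"
      have "cs ! (k - 1) \<in> {1..m}" using sub k0 len by (metis diff_less less_one nth_mem subsetD)
      then have xC: "x \<in> carrier ?G"
        unfolding x_def sym_group_carrier using p by (simp add: permutes_swap_id)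
      have sk: "s ^^ k = id"
      proof
        fix y show "(s ^^ k) y = id y"
        proof (cases "y \<in> set cs")
          case True
          then obtain i where "y = cs ! (i mod k)" using incs by blast
          then show ?thesis using spow[of k i] by simp
        next
          case False then show ?thesis using sout by simp
        qed
      qed
      have "generate ?G {s} \<inter> conj_set ?G (generate ?G {s}) x = generate ?G {s [^]\<^bsub>?G\<^esub> a}"
      proof (rule G.conj_abstract[OF fin sC xC])
        show "x \<otimes>\<^bsub>?G\<^esub> s [^]\<^bsub>?G\<^esub> a = s [^]\<^bsub>?G\<^esub> a \<otimes>\<^bsub>?G\<^esub> x"
          using True sk by (simp add: sym_pow sym_group_mult)
      next
        fix j l :: nat
        assume "x \<otimes>\<^bsub>?G\<^esub> s [^]\<^bsub>?G\<^esub> l = s [^]\<^bsub>?G\<^esub> j \<otimes>\<^bsub>?G\<^esub> x"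
        then have "x ((s ^^ l) p) = (s ^^ j) (x p)"
          by (simp add: sym_pow sym_group_mult fun_eq_iff)
        then have "cs ! ((k - 1) mod k) = (s ^^ j) (cs ! ((k - 1) mod k))"
          using sout[OF p(2)] k0 by (simp add: x_def)
        also have "\<dots> = cs ! ((k - 1 + j) mod k)" by (rule spow)
        finally have "int k dvd int (k - 1) - int (k - 1 + j)"
          using modinj by metis
        moreover have "int (k - 1) - int (k - 1 + j) = - int j" by simp
        ultimately have "int k dvd int j" by (metis dvd_minus_iff)
        then show "a dvd j" using True by simp
      qed
      then show ?thesis using xC by blast
    next
      case False
      then have ak: "a < k" using assms(8) k0 by (simp add: dvd_imp_le le_neq_implies_less)
      define n where "n = k div a"
      have kn: "k = n * a" using assms(8) unfolding n_def by simp
      define ds where "ds = map (\<lambda>t. cs ! (t * a)) [0..<n]"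
      have lt: "t < n \<Longrightarrow> t * a < k" for t using kn assms(7) by simp
      have lends: "length ds = n" by (simp add: ds_def)
      have dsnth: "t < n \<Longrightarrow> ds ! t = cs ! (t * a)" for t by (simp add: ds_def)
      have distds: "distinct ds"
        unfolding ds_def distinct_map
      proof
        show "inj_on (\<lambda>t. cs ! (t * a)) (set [0..<n])"
        proof (rule inj_onI)
          fix t t' assume "t \<in> set [0..<n]" "t' \<in> set [0..<n]" "cs ! (t * a) = cs ! (t' * a)"
          then have tt: "t < n" "t' < n" "cs ! (t * a) = cs ! (t' * a)" by auto
          have "t * a = t' * a" using inj[OF tt(3) lt[OF tt(1)] lt[OF tt(2)]] .
          then show "t = t'" using assms(7) by simp
        qed
      qed simp
      have setds: "set ds \<subseteq> set cs" using lt len unfolding ds_def by auto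
      define x where "x = cycle_of_list ds"
      have xC: "x \<in> carrier ?G"
        unfolding x_def sym_group_carrier using permutes_subset[OF cycle_permutes] setds sub by blast
      define \<delta> where "\<delta> i = (if a dvd i then a else 0)" for i :: nat
      have dvdmod: "a dvd (i mod k) \<longleftrightarrow> a dvd i" for i using assms(8) by (simp add: dvd_mod_iff)
      have xcs: "x (cs ! (i mod k)) = cs ! ((i + \<delta> i) mod k)" for i
      proof (cases "a dvd i")
        case True
        define r where "r = i mod k"
        have rk: "r < k" using k0 by (simp add: r_def)
        define t where "t = r div a"
        have rt: "r = t * a" using True dvdmod unfolding t_def r_def by simp
        have tn: "t < n" using rt rk kn assms(7) by simp
        have "map (x ^^ 1) ds = rotate 1 ds" unfolding x_def using cyclic_rotation[OF distds] by blast
        then have m1: "map x ds = rotate 1 ds" by simp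
        have "x (ds ! t) = rotate 1 ds ! t" using tn lends nth_map[of t ds x] m1 by simp
        also have "\<dots> = ds ! ((t + 1) mod n)" using tn lends by (simp add: nth_rotate1)
        also have "\<dots> = cs ! (((t + 1) mod n) * a)" using tn by (simp add: dsnth)
        also have "((t + 1) mod n) * a = ((t + 1) * a) mod k" unfolding kn by (rule mod_mult_mult2[symmetric])
        also have "(t + 1) * a = r + a" using rt by simp
        also have "(r + a) mod k = (i + \<delta> i) mod k" using True unfolding r_def \<delta>_def by (simp add: mod_add_left_eq)
        finally show ?thesis using dsnth[OF tn] rt r_def by simp
      next
        case False
        have "cs ! (i mod k) \<notin> set ds"
        proof
          assume "cs ! (i mod k) \<in> set ds"
          then obtain t where t: "t < n" "cs ! (i mod k) = cs ! (t * a)" unfolding ds_def by auto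
          then have "i mod k = t * a" using inj lt k0 by simp
          then have "a dvd i" using dvdmod by (metis dvd_triv_right)
          then show False using False by simp
        qed
        then show ?thesis unfolding x_def using False by (simp add: id_outside_supp \<delta>_def)
      qed
      have xout: "x y = y" if "y \<notin> set cs" for y
      proof -
        have "y \<notin> set ds" using that setds by blast
        then show ?thesis unfolding x_def by (rule id_outside_supp)
      qed
      have "generate ?G {s} \<inter> conj_set ?G (generate ?G {s}) x = generate ?G {s [^]\<^bsub>?G\<^esub> a}"
      proof (rule G.conj_abstract[OF fin sC xC])
        have "x \<circ> s ^^ a = s ^^ a \<circ> x"
        proof
          fix y show "(x \<circ> s ^^ a) y = (s ^^ a \<circ> x) y"
          proof (cases "y \<in> set cs")
            case True
            then obtain i where i: "y = cs ! (i mod k)" using incs by blast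
            have "\<delta> (i + a) = \<delta> i" unfolding \<delta>_def by simp
            then have "(x \<circ> s ^^ a) y = cs ! ((i + a + \<delta> i) mod k)"
              using i spow xcs by simp
            also have "\<dots> = (s ^^ a \<circ> x) y" using i spow xcs by (simp add: ac_simps)
            finally show ?thesis .
          next
            case False then show ?thesis using sout xout by simp
          qed
        qed
        then show "x \<otimes>\<^bsub>?G\<^esub> s [^]\<^bsub>?G\<^esub> a = s [^]\<^bsub>?G\<^esub> a \<otimes>\<^bsub>?G\<^esub> x"
          by (simp add: sym_pow sym_group_mult)
      next
        fix j l :: nat
        assume "x \<otimes>\<^bsub>?G\<^esub> s [^]\<^bsub>?G\<^esub> l = s [^]\<^bsub>?G\<^esub> j \<otimes>\<^bsub>?G\<^esub> x"
        then have eq: "x ((s ^^ l) y) = (s ^^ j) (x y)" for y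
          by (simp add: sym_pow sym_group_mult fun_eq_iff)
        have H: "int k dvd ((i + int l + (if int a dvd (i + int l) then int a else 0))
                   - (i + (if int a dvd i then int a else 0) + int j))" if i0: "0 \<le> i" for i :: int
        proof -
          define i' where "i' = nat i"
          have ii: "i = int i'" using i0 unfolding i'_def by simp
          have "cs ! ((i' + l + \<delta> (i' + l)) mod k) = cs ! ((i' + \<delta> i' + j) mod k)"
          proof -
            have "x ((s ^^ l) (cs ! (i' mod k))) = cs ! ((i' + l + \<delta> (i' + l)) mod k)"
              using spow xcs by simp
            moreover have "(s ^^ j) (x (cs ! (i' mod k))) = cs ! ((i' + \<delta> i' + j) mod k)"
              using spow xcs by simp
            ultimately show ?thesis using eq[of "cs ! (i' mod k)"] by simp
          qed
          then have "int k dvd int (i' + l + \<delta> (i' + l)) - int (i' + \<delta> i' + j)" by (rule modinj)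
          moreover have "int (\<delta> q) = (if int a dvd int q then int a else 0)" for q
            unfolding \<delta>_def by simp
          ultimately show ?thesis unfolding ii by simp
        qed
        have "int a dvd int j"
        proof (rule arith_key[of "int a" "int k" "int l"])
          show "0 < int a" using assms(7) by simp
          show "int a < int k" using ak by simp
          show "int a dvd int k" using assms(8) by simp
          show "\<not> (int k = 4 \<and> int a = 2)" using assms(9) by auto
          show "0 \<le> int l" by simp
        qed (rule H)
        then show "a dvd j" by simp
      qed
      then show ?thesis using xC by blast
    qed
  qed
qed


end
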